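(* Let $T$ be an operator function on an interval $\Delta$ satisfying (A1)–(A3) and (VM). Let $a>0$, $\mu_1,\mu_2\in\Delta$ with $\mu_1<\mu_2$, and let $\mathcal M$ be a subspace of $\mathcal D$. Suppose $\mu_2\in\sigma(T)$ and $\mathfrak t(\mu_2)[x]\ge a\|x\|^2$ for all $x\in\mathcal M$. Then there exists a subspace $\mathcal M'$ with $\mathcal M\subsetneq\mathcal M'\subset\mathcal D$ such that $\mathfrak t(\mu_1)[x]>0$ for all $x\in\mathcal M'\setminus\{0\}$.
   Context: "Subspace" means linear manifold, not necessarily closed. For a self-adjoint operator $A$ with spectral measure $E$, its form is $\mathfrak a[x,y]=\int_{\mathbb R}\mu\,d\langle E(\mu)x,y\rangle$ on $\mathrm{dom}(|A|^{1/2})$, $\mathfrak a[x]:=\mathfrak a[x,x]$. $\sigma(T)=\{\lambda\in\Delta:0\in\sigma(T(\lambda))\}$. (A1) $T(\lambda)$ self-adjoint for each $\lambda\in\Delta$, with form $\mathfrak t(\lambda)$; (A2) $\mathrm{dom}\,\mathfrak t(\lambda)=:\mathcal D$ independent of $\lambda$; (A3) for each $x\in\mathcal D\setminus\{0\}$, $\lambda\mapsto\mathfrak t(\lambda)[x]$ is continuous, and if $\mathfrak t(\lambda_0)[x]=0$ then $\mathfrak t(\lambda)[x]>0$ for $\lambda<\lambda_0$ and $<0$ for $\lambda>\lambda_0$ ($\lambda\in\Delta$). (VM): for every $u\in\mathcal D$, $\mathfrak t(\cdot)[u]$ is differentiable on $\Delta$ with derivative $\mathfrak t'(\cdot)[u]$,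 and for every compact subinterval $I\subset\Delta$ there are $\varepsilon,\delta>0$ with: $x\in\mathcal D$, $\|x\|=1$, $\lambda\in I$, $|\mathfrak t(\lambda)[x]|\le\varepsilon$ imply $\mathfrak t'(\lambda)[x]\le-\delta$. *)

theory Defs
  imports "HOL-Analysis.Analysis" "HOL-Probability.Probability"
begin

text \<open>A complex Hilbert space is encoded as a real Hilbert space (type class
  real_inner + complete_space, whose inner product is the real part of the complex
  one) together with a complex structure J (multiplication by the imaginary unit).\<close>

definition complex_structure :: "('h::real_inner \<Rightarrow> 'h) \<Rightarrow> bool" where
  "complex_structure J \<longleftrightarrow> linear J \<and> (\<forall>x. J (J x) = - x) \<and> (\<forall>x y. inner (J x) (J y) = inner x y)"

definition complex_subspace :: "('h::real_inner \<Rightarrow> 'h) \<Rightarrow> 'h set \<Rightarrow> bool" where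
  "complex_subspace J M \<longleftrightarrow> subspace M \<and> J ` M \<subseteq> M"

definition selfadjoint :: "('h::real_inner \<Rightarrow> 'h) \<Rightarrow> 'h set \<Rightarrow> ('h \<Rightarrow> 'h) \<Rightarrow> bool" where
  "selfadjoint J D A \<longleftrightarrow>
     complex_subspace J D \<and> closure D = UNIV \<and>
     (\<forall>x\<in>D. \<forall>y\<in>D. A (x + y) = A x + A y) \<and>
     (\<forall>x\<in>D. \<forall>c. A (c *\<^sub>R x) = c *\<^sub>R A x) \<and>
     (\<forall>x\<in>D. A (J x) = J (A x)) \<and>
     (\<forall>y. y \<in> D \<longleftrightarrow> (\<exists>z. \<forall>x\<in>D. inner (A x) y = inner x z)) \<and>
     (\<forall>x\<in>D. \<forall>y\<in>D. inner (A x) y = inner x (A y))"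

definition zero_in_spectrum :: "'h::real_normed_vector set \<Rightarrow> ('h \<Rightarrow> 'h) \<Rightarrow> bool" where
  "zero_in_spectrum D A \<longleftrightarrow>
     \<not> (\<exists>B. bounded_linear B \<and> (\<forall>y. B y \<in> D \<and> A (B y) = y) \<and> (\<forall>x\<in>D. B (A x) = x))"

definition opfun_spectrum :: "real set \<Rightarrow> (real \<Rightarrow> 'h::real_normed_vector set) \<Rightarrow> (real \<Rightarrow> 'h \<Rightarrow> 'h) \<Rightarrow> real set" where
  "opfun_spectrum \<Delta> Dom T = {l \<in> \<Delta>. zero_in_spectrum (Dom l) (T l)}"

definition spec_qmeasure :: "(real set \<Rightarrow> 'h::real_inner \<Rightarrow> 'h) \<Rightarrow> 'h \<Rightarrow> real measure" where
  "spec_qmeasure E x = measure_of UNIV (sets borel) (\<lambda>B. ennreal (inner (E B x) x))"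

text \<open>E is the spectral measure of the self-adjoint operator A (domain D):
  a (complex-linear) projection valued measure on the Borel sets with A = \<integral> \<mu> dE(\<mu>),
  i.e. D = {x. \<integral> \<mu>^2 d<E x,x> < \<infinity>} and <Ax,x> = \<integral> \<mu> d<E x,x> on D
  (this determines the symmetric operator A by polarization).\<close>
definition spectral_measure_of ::
  "('h::real_inner \<Rightarrow> 'h) \<Rightarrow> 'h set \<Rightarrow> ('h \<Rightarrow> 'h) \<Rightarrow> (real set \<Rightarrow> 'h \<Rightarrow> 'h) \<Rightarrow> bool" where
  "spectral_measure_of J D A E \<longleftrightarrow>
     (\<forall>B\<in>sets borel. bounded_linear (E B) \<and> (\<forall>x. E B (E B x) = E B x) \<and>
         (\<forall>x y. inner (E B x) y = inner x (E B y)) \<and> (\<forall>x. E B (J x) = J (E B x))) \<and>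
     (\<forall>x. E UNIV x = x) \<and>
     (\<forall>B\<in>sets borel. \<forall>C\<in>sets borel. \<forall>x. E (B \<inter> C) x = E B (E C x)) \<and>
     (\<forall>x F. range F \<subseteq> sets borel \<longrightarrow> disjoint_family F \<longrightarrow>
         (\<lambda>n. inner (E (F n) x) x) sums inner (E (\<Union>(range F)) x) x) \<and>
     D = {x. integrable (spec_qmeasure E x) (\<lambda>\<mu>. \<mu> ^ 2)} \<and>
     (\<forall>x\<in>D. inner (A x) x = integral\<^sup>L (spec_qmeasure E x) (\<lambda>\<mu>. \<mu>))"

text \<open>Form domain dom(|A|^(1/2)) = {x. \<integral> |\<mu>| d<E x,x> < \<infinity>} and the form a[x] = \<integral> \<mu> d<E x,x>.\<close>
definition form_dom :: "(real set \<Rightarrow> 'h::real_inner \<Rightarrow> 'h) \<Rightarrow> 'h set" where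
  "form_dom E = {x. integrable (spec_qmeasure E x) (\<lambda>\<mu>. \<mu>)}"

definition sform :: "(real set \<Rightarrow> 'h::real_inner \<Rightarrow> 'h) \<Rightarrow> 'h \<Rightarrow> real" where
  "sform E x = integral\<^sup>L (spec_qmeasure E x) (\<lambda>\<mu>. \<mu>)"

end

theory Submission
  imports Defs
begin


lemma hilbert_proj:
  fixes R :: "'h::{real_inner,complete_space} set" and y :: 'h
  assumes sub: "subspace R" and cl: "closed R"
  shows "\<exists>r\<in>R. \<forall>w\<in>R. inner (y - r) w = 0"
proof -
  define S where "S = {(norm (y - r))\<^sup>2 | r. r \<in> R}"
  define d where "d = Inf S"
  have Sne: "S \<noteq> {}" using sub subspace_0 unfolding S_def by blast
  have Sbdd: "bdd_below S" unfolding S_def by (rule bdd_belowI[of _ 0]) auto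
  have dle: "d \<le> (norm (y - r))\<^sup>2" if "r \<in> R" for r
    unfolding d_def using Sbdd that by (auto simp: S_def intro!: cInf_lower)
  have ex: "\<exists>r\<in>R. (norm (y - r))\<^sup>2 < d + 1 / (Suc n)" for n
  proof -
    have "Inf S < d + 1 / Suc n" unfolding d_def by simp
    from cInf_lessD[OF Sne this] show ?thesis by (auto simp: S_def)
  qed
  then obtain rr where rr: "\<And>n. rr n \<in> R" "\<And>n. (norm (y - rr n))\<^sup>2 < d + 1 / (Suc n)"
    by metis
  have par: "(norm (rr n - rr m))\<^sup>2 < 2 / Suc n + 2 / Suc m" for n m
  proof -
    have mid: "(1/2) *\<^sub>R (rr n + rr m) \<in> R"
      using rr(1) sub by (simp add: subspace_add subspace_scale)
    have pl: "(norm (rr n - rr m))\<^sup>2 = 2 * (norm (y - rr n))\<^sup>2 + 2 * (norm (y - rr m))\<^sup>2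
              - 4 * (norm (y - (1/2) *\<^sub>R (rr n + rr m)))\<^sup>2"
      by (simp add: power2_norm_eq_inner inner_diff_left inner_diff_right inner_add_left inner_add_right
          inner_commute algebra_simps)
    show ?thesis using pl dle[OF mid] rr(2)[of n] rr(2)[of m] by linarith
  qed
  have "Cauchy rr"
  proof (rule metric_CauchyI)
    fix e :: real assume e: "e > 0"
    obtain N :: nat where N: "4 / e\<^sup>2 < N" using reals_Archimedean2 by blast
    show "\<exists>M. \<forall>m\<ge>M. \<forall>n\<ge>M. dist (rr m) (rr n) < e"
    proof (intro exI allI impI)
      fix m n assume mn: "N \<le> m" "N \<le> n"
      have "2 / real (Suc n) \<le> 2 / Suc N" using mn by (intro divide_left_mono) auto
      moreover have "2 / real (Suc m) \<le> 2 / Suc N" using mn by (intro divide_left_mono) auto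
      moreover have "4 / real (Suc N) < e\<^sup>2"
      proof -
        have "0 < e\<^sup>2" using e by simp
        have "4 < real N * e\<^sup>2" using N \<open>0 < e\<^sup>2\<close> by (simp add: field_simps)
        then have "4 < real (Suc N) * e\<^sup>2" using \<open>0 < e\<^sup>2\<close> by (simp only: of_nat_Suc distrib_right)
        then show ?thesis by (simp add: pos_divide_less_eq mult.commute)
      qed
      ultimately have "(norm (rr m - rr n))\<^sup>2 < e\<^sup>2" using par[of m n] by linarith
      then show "dist (rr m) (rr n) < e" using e
        by (simp add: dist_norm power_less_imp_less_base)
    qed
  qed
  then obtain r where lim: "rr \<longlonglongrightarrow> r" using Cauchy_convergent convergent_def by blast
  have rR: "r \<in> R" using cl lim rr(1) closed_sequential_limits by blast
  have "(norm (y - r))\<^sup>2 \<le> d"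
  proof (rule tendsto_le[OF trivial_limit_sequentially])
    show "(\<lambda>n. d + 1 / Suc n) \<longlonglongrightarrow> d"
      using tendsto_add[OF tendsto_const LIMSEQ_inverse_real_of_nat] by (simp add: inverse_eq_divide)
    show "(\<lambda>n. (norm (y - rr n))\<^sup>2) \<longlonglongrightarrow> (norm (y - r))\<^sup>2"
      by (intro tendsto_intros lim)
    show "\<forall>\<^sub>F n in sequentially. (norm (y - rr n))\<^sup>2 \<le> d + 1 / Suc n"
      using rr(2) less_imp_le by (auto intro!: always_eventually)
  qed
  then have opt: "(norm (y - r))\<^sup>2 \<le> (norm (y - r'))\<^sup>2" if "r' \<in> R" for r'
    using dle[OF that] by linarith
  show ?thesis
  proof (intro bexI[OF _ rR] ballI)
    fix w assume w: "w \<in> R"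
    show "inner (y - r) w = 0"
    proof (cases "w = 0")
      case True then show ?thesis by simp
    next
      case False
      define t where "t = inner (y - r) w / inner w w"
      have ww: "inner w w > 0" using False by simp
      have "r + t *\<^sub>R w \<in> R" using rR w sub by (simp add: subspace_add subspace_scale)
      from opt[OF this] have "(norm (y - r))\<^sup>2 \<le> (norm ((y - r) - t *\<^sub>R w))\<^sup>2"
        by (simp add: algebra_simps)
      also have "\<dots> = (norm (y - r))\<^sup>2 - 2 * t * inner (y - r) w + t\<^sup>2 * inner w w"
        unfolding power2_norm_eq_inner by (simp add: inner_diff_left inner_diff_right inner_commute
            power2_eq_square algebra_simps)
      also have "\<dots> = (norm (y - r))\<^sup>2 - (inner (y - r) w)\<^sup>2 / inner w w"
        using ww by (simp add: t_def power2_eq_square field_simps)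
      finally have "(inner (y - r) w)\<^sup>2 / inner w w \<le> 0" by simp
      then have "(inner (y - r) w)\<^sup>2 \<le> 0" using ww by (simp add: divide_le_0_iff)
      then show ?thesis by simp
    qed
  qed
qed

lemma sa_facts:
  assumes sa: "selfadjoint J D A"
  shows "complex_subspace J D" "subspace D" "closure D = UNIV"
    "\<And>x y. x\<in>D \<Longrightarrow> y\<in>D \<Longrightarrow> A (x + y) = A x + A y"
    "\<And>x r. x\<in>D \<Longrightarrow> A (r *\<^sub>R x) = r *\<^sub>R A x"
    "\<And>x. x\<in>D \<Longrightarrow> A (J x) = J (A x)"
    "\<And>y. y \<in> D \<longleftrightarrow> (\<exists>z. \<forall>x\<in>D. inner (A x) y = inner x z)"
    "\<And>x y. x\<in>D \<Longrightarrow> y\<in>D \<Longrightarrow> inner (A x) y = inner x (A y)"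
proof -
  have f: "complex_subspace J D \<and> closure D = UNIV \<and> (\<forall>x\<in>D. \<forall>y\<in>D. A (x + y) = A x + A y) \<and>
     (\<forall>x\<in>D. \<forall>c. A (c *\<^sub>R x) = c *\<^sub>R A x) \<and> (\<forall>x\<in>D. A (J x) = J (A x)) \<and>
     (\<forall>y. y \<in> D \<longleftrightarrow> (\<exists>z. \<forall>x\<in>D. inner (A x) y = inner x z)) \<and>
     (\<forall>x\<in>D. \<forall>y\<in>D. inner (A x) y = inner x (A y))"
    using sa unfolding selfadjoint_def .
  show "complex_subspace J D" using f by (rule conjunct1)
  show "subspace D" using conjunct1[OF f] unfolding complex_subspace_def by (rule conjunct1)
  show "closure D = UNIV" using f by (elim conjE)
  have add': "\<forall>x\<in>D. \<forall>y\<in>D. A (x + y) = A x + A y" using f by (elim conjE)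
  have scal': "\<forall>x\<in>D. \<forall>c. A (c *\<^sub>R x) = c *\<^sub>R A x" using f by (elim conjE)
  have J': "\<forall>x\<in>D. A (J x) = J (A x)" using f by (elim conjE)
  have adj': "\<forall>y. y \<in> D \<longleftrightarrow> (\<exists>z. \<forall>x\<in>D. inner (A x) y = inner x z)" using f by (elim conjE)
  have sym': "\<forall>x\<in>D. \<forall>y\<in>D. inner (A x) y = inner x (A y)" using f by (elim conjE)
  show "\<And>x y. x\<in>D \<Longrightarrow> y\<in>D \<Longrightarrow> A (x + y) = A x + A y" using add' by blast
  show "\<And>x r. x\<in>D \<Longrightarrow> A (r *\<^sub>R x) = r *\<^sub>R A x" using scal' by blast
  show "\<And>x. x\<in>D \<Longrightarrow> A (J x) = J (A x)" using J' by blast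
  show "\<And>y. y \<in> D \<longleftrightarrow> (\<exists>z. \<forall>x\<in>D. inner (A x) y = inner x z)" using adj' by (rule spec)
  show "\<And>x y. x\<in>D \<Longrightarrow> y\<in>D \<Longrightarrow> inner (A x) y = inner x (A y)" using sym' by blast
qed

lemma no_spec:
  fixes A :: "'h::{real_inner,complete_space} \<Rightarrow> 'h"
  assumes sa: "selfadjoint J D A" and c: "c > 0" and lb: "\<forall>x\<in>D. c * norm x \<le> norm (A x)"
  shows "\<not> zero_in_spectrum D A"
proof -
  have f: "complex_subspace J D \<and> closure D = UNIV \<and> (\<forall>x\<in>D. \<forall>y\<in>D. A (x + y) = A x + A y) \<and>
     (\<forall>x\<in>D. \<forall>c. A (c *\<^sub>R x) = c *\<^sub>R A x) \<and> (\<forall>x\<in>D. A (J x) = J (A x)) \<and>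
     (\<forall>y. y \<in> D \<longleftrightarrow> (\<exists>z. \<forall>x\<in>D. inner (A x) y = inner x z)) \<and>
     (\<forall>x\<in>D. \<forall>y\<in>D. inner (A x) y = inner x (A y))"
    using sa unfolding selfadjoint_def .
  have subD: "subspace D" using conjunct1[OF f] unfolding complex_subspace_def by (rule conjunct1)
  have clD: "closure D = UNIV" using f by (elim conjE)
  have add': "\<forall>x\<in>D. \<forall>y\<in>D. A (x + y) = A x + A y" using f by (elim conjE)
  have scal': "\<forall>x\<in>D. \<forall>c. A (c *\<^sub>R x) = c *\<^sub>R A x" using f by (elim conjE)
  have adj': "\<forall>y. y \<in> D \<longleftrightarrow> (\<exists>z. \<forall>x\<in>D. inner (A x) y = inner x z)" using f by (elim conjE)
  have sym': "\<forall>x\<in>D. \<forall>y\<in>D. inner (A x) y = inner x (A y)" using f by (elim conjE)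
  have add: "\<And>x y. x\<in>D \<Longrightarrow> y\<in>D \<Longrightarrow> A (x + y) = A x + A y" using add' by blast
  have scal: "\<And>x r. x\<in>D \<Longrightarrow> A (r *\<^sub>R x) = r *\<^sub>R A x" using scal' by blast
  have adj: "\<And>y. y \<in> D \<longleftrightarrow> (\<exists>z. \<forall>x\<in>D. inner (A x) y = inner x z)" using adj' by (rule spec)
  have sym: "\<And>x y. x\<in>D \<Longrightarrow> y\<in>D \<Longrightarrow> inner (A x) y = inner x (A y)" using sym' by blast
  have D0: "0 \<in> D" using subD subspace_0 by blast
  have A0: "A 0 = 0" using scal[OF D0, of 0] by simp
  have Ddiff: "x - y \<in> D" if "x \<in> D" "y \<in> D" for x y using subD that subspace_diff by blast
  have Adiff: "A (x - y) = A x - A y" if "x \<in> D" "y \<in> D" for x y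
  proof -
    have "(-1) *\<^sub>R y \<in> D" using subD that(2) subspace_scale by blast
    then have "A (x + (-1) *\<^sub>R y) = A x + A ((-1) *\<^sub>R y)" using add[OF that(1)] by blast
    also have "\<dots> = A x - A y" using scal[OF that(2), of "-1"] by simp
    finally have "A (x + (-1) *\<^sub>R y) = A x - A y" .
    then show ?thesis by simp
  qed
  have dens: "u = 0" if "\<forall>w\<in>D. inner w u = 0" for u
  proof -
    have "u \<in> closure D" using clD by simp
    then obtain s where s: "\<And>n. s n \<in> D" "s \<longlonglongrightarrow> u" using closure_sequential by metis
    have "(\<lambda>n. inner (s n) u) \<longlonglongrightarrow> inner u u" by (intro tendsto_intros s)
    moreover have "(\<lambda>n. inner (s n) u) = (\<lambda>n. 0)" using that s(1) by auto
    ultimately have "inner u u = 0" using LIMSEQ_unique tendsto_const by metis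
    then show ?thesis by simp
  qed
  have inj: "x = y" if "x \<in> D" "y \<in> D" "A x = A y" for x y
  proof -
    have "c * norm (x - y) \<le> norm (A (x - y))" using lb Ddiff[OF that(1,2)] by blast
    then have "c * norm (x - y) \<le> 0" using Adiff[OF that(1,2)] that(3) by simp
    then show ?thesis using c by (simp add: mult_le_0_iff)
  qed
  define R where "R = A ` D"
  have subR: "subspace R" unfolding subspace_def R_def
  proof (intro conjI ballI allI)
    show "0 \<in> A ` D" using A0 D0 by force
    fix x y assume "x \<in> A ` D" "y \<in> A ` D"
    then obtain x' y' where "x' \<in> D" "y' \<in> D" "x = A x'" "y = A y'" by blast
    moreover have "x' + y' \<in> D" using subD subspace_add \<open>x' \<in> D\<close> \<open>y' \<in> D\<close> by blast
    moreover have "A (x' + y') = x + y" using add \<open>x' \<in> D\<close> \<open>y' \<in> D\<close> \<open>x = A x'\<close> \<open>y = A y'\<close> by simp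
    ultimately show "x + y \<in> A ` D" by (metis image_eqI)
  next
    fix r x assume "x \<in> A ` D"
    then obtain x' where "x' \<in> D" "x = A x'" by blast
    moreover have "r *\<^sub>R x' \<in> D" using subD subspace_scale \<open>x' \<in> D\<close> by blast
    moreover have "A (r *\<^sub>R x') = r *\<^sub>R x" using scal \<open>x' \<in> D\<close> \<open>x = A x'\<close> by simp
    ultimately show "r *\<^sub>R x \<in> A ` D" by (metis image_eqI)
  qed
  have closedlim: "x0 \<in> D \<and> A x0 = l" if xs: "\<And>n. xs n \<in> D" "xs \<longlonglongrightarrow> x0" "(\<lambda>n. A (xs n)) \<longlonglongrightarrow> l" for xs x0 l
  proof -
    have "inner (A w) x0 = inner w l" if w: "w \<in> D" for w
    proof -
      have "(\<lambda>n. inner (A w) (xs n)) \<longlonglongrightarrow> inner (A w) x0" by (intro tendsto_intros xs)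
      moreover have "(\<lambda>n. inner (A w) (xs n)) = (\<lambda>n. inner w (A (xs n)))" using sym w xs(1) by auto
      moreover have "(\<lambda>n. inner w (A (xs n))) \<longlonglongrightarrow> inner w l" by (intro tendsto_intros xs)
      ultimately show ?thesis using LIMSEQ_unique by metis
    qed
    then have "\<forall>w\<in>D. inner (A w) x0 = inner w l" by blast
    then have x0D: "x0 \<in> D" using adj[of x0] by blast
    have "A x0 - l = 0"
    proof (rule dens, intro ballI)
      fix w assume w: "w \<in> D"
      have "inner w (A x0 - l) = inner (A w) x0 - inner w l" using sym[OF w x0D] by (simp add: inner_diff_right)
      then show "inner w (A x0 - l) = 0" using \<open>\<And>w. w \<in> D \<Longrightarrow> inner (A w) x0 = inner w l\<close> w by simp
    qed
    then show ?thesis using x0D by simp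
  qed
  have clR: "closed R" unfolding closed_sequential_limits
  proof (intro allI impI, elim conjE)
    fix s l assume sR: "\<forall>n. s n \<in> R" and sl: "s \<longlonglongrightarrow> l"
    have "\<forall>n. \<exists>x. x \<in> D \<and> A x = s n" using sR unfolding R_def by (simp add: image_iff) (metis)
    then obtain xs where "\<forall>n. xs n \<in> D \<and> A (xs n) = s n" using choice[of "\<lambda>n x. x \<in> D \<and> A x = s n"] by blast
    then have xs: "\<And>n. xs n \<in> D" "\<And>n. A (xs n) = s n" by auto
    have "Cauchy s" using sl by (rule LIMSEQ_imp_Cauchy)
    have "Cauchy xs"
    proof (rule metric_CauchyI)
      fix e :: real assume e: "e > 0"
      have ce: "c * e > 0" using c e by simp
      obtain M where M: "\<forall>m\<ge>M. \<forall>n\<ge>M. dist (s m) (s n) < c * e"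
        using metric_CauchyD[OF \<open>Cauchy s\<close> ce] by blast
      show "\<exists>M. \<forall>m\<ge>M. \<forall>n\<ge>M. dist (xs m) (xs n) < e"
      proof (intro exI[of _ M] allI impI)
        fix m n assume "M \<le> m" "M \<le> n"
        then have "dist (s m) (s n) < c * e" using M by auto
        moreover have "c * dist (xs m) (xs n) \<le> dist (s m) (s n)"
        proof -
          have "c * norm (xs m - xs n) \<le> norm (A (xs m - xs n))" using lb Ddiff[OF xs(1) xs(1)] by blast
          then show ?thesis using Adiff[OF xs(1) xs(1)] xs(2) by (simp add: dist_norm)
        qed
        ultimately have "c * dist (xs m) (xs n) < c * e" by linarith
        then show "dist (xs m) (xs n) < e" using mult_less_cancel_left_pos[OF c] by blast
      qed
    qed
    then have "convergent xs" by (rule Cauchy_convergent)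
    then obtain x0 where "xs \<longlonglongrightarrow> x0" unfolding convergent_def by blast
    moreover have "(\<lambda>n. A (xs n)) \<longlonglongrightarrow> l" using sl xs(2) by simp
    ultimately have "x0 \<in> D \<and> A x0 = l" using closedlim[of xs x0 l] xs(1) by blast
    then show "l \<in> R" unfolding R_def by (metis image_eqI)
  qed
  have surj: "\<exists>x\<in>D. A x = y" for y
  proof -
    obtain r where r: "r \<in> R" "\<forall>w\<in>R. inner (y - r) w = 0" using hilbert_proj[OF subR clR] by blast
    define v where "v = y - r"
    have "\<forall>w\<in>D. inner (A w) v = inner w 0" using r(2) unfolding R_def v_def by (simp add: inner_commute[of "A _"])
    then have vD: "v \<in> D" using adj[of v] by blast
    have "A v = 0"
    proof (rule dens, intro ballI)
      fix w assume w: "w \<in> D"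
      have "inner w (A v) = inner (A w) v" using sym[OF w vD] by simp
      then show "inner w (A v) = 0" using r(2) w unfolding R_def v_def by (simp add: inner_commute[of "A _"])
    qed
    then have "v = 0" using inj[OF vD D0] A0 by simp
    then have "y \<in> R" using r(1) unfolding v_def by simp
    then show ?thesis unfolding R_def by (simp add: image_iff) (metis)
  qed
  define B where "B y = (SOME x. x \<in> D \<and> A x = y)" for y
  have B: "B y \<in> D" "A (B y) = y" for y
    using someI_ex[OF surj[of y, unfolded Bex_def]] unfolding B_def by auto
  have BA: "B (A x) = x" if "x \<in> D" for x using inj[OF B(1) that] B(2) by simp
  have "bounded_linear B"
  proof (rule bounded_linear_intro[where K = "1 / c"])
    fix x y
    have "B x + B y \<in> D" using B(1) subD subspace_add by blast
    moreover have "A (B x + B y) = x + y" using add[OF B(1) B(1)] B(2) by simp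
    ultimately show "B (x + y) = B x + B y" using inj[OF B(1)] B(2) by (metis)
  next
    fix r x
    have "r *\<^sub>R B x \<in> D" using B(1) subD subspace_scale by blast
    moreover have "A (r *\<^sub>R B x) = r *\<^sub>R x" using scal[OF B(1)] B(2) by simp
    ultimately show "B (r *\<^sub>R x) = r *\<^sub>R B x" using inj[OF B(1)] B(2) by (metis)
  next
    fix x
    have "c * norm (B x) \<le> norm (A (B x))" using lb B(1) by blast
    then have "c * norm (B x) \<le> norm x" using B(2) by simp
    then show "norm (B x) \<le> norm x * (1 / c)" using c by (simp add: field_simps)
  qed
  then show ?thesis unfolding zero_in_spectrum_def using B BA by blast
qed


locale pvm =
  fixes E :: "real set \<Rightarrow> 'h::real_inner \<Rightarrow> 'h"
  assumes E_lin: "B \<in> sets borel \<Longrightarrow> bounded_linear (E B)"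
  and E_idem: "B \<in> sets borel \<Longrightarrow> E B (E B x) = E B x"
  and E_sym: "B \<in> sets borel \<Longrightarrow> inner (E B x) y = inner x (E B y)"
  and E_UNIV: "E UNIV x = x"
  and E_inter: "B \<in> sets borel \<Longrightarrow> C \<in> sets borel \<Longrightarrow> E (B \<inter> C) x = E B (E C x)"
  and E_sums: "range F \<subseteq> sets borel \<Longrightarrow> disjoint_family F \<Longrightarrow>
     (\<lambda>n. inner (E (F n) x) x) sums inner (E (\<Union>(range F)) x) x"

lemma spectral_pvm:
  assumes "spectral_measure_of J D A E" shows "pvm E"
proof -
  have h: "(\<forall>B\<in>sets borel. bounded_linear (E B) \<and> (\<forall>x. E B (E B x) = E B x) \<and>
         (\<forall>x y. inner (E B x) y = inner x (E B y)) \<and> (\<forall>x. E B (J x) = J (E B x))) \<and>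
     (\<forall>x. E UNIV x = x) \<and>
     (\<forall>B\<in>sets borel. \<forall>C\<in>sets borel. \<forall>x. E (B \<inter> C) x = E B (E C x)) \<and>
     (\<forall>x F. range F \<subseteq> sets borel \<longrightarrow> disjoint_family F \<longrightarrow>
         (\<lambda>n. inner (E (F n) x) x) sums inner (E (\<Union>(range F)) x) x)"
    using assms unfolding spectral_measure_of_def by (elim conjE) (intro conjI; assumption)
  have a1: "\<forall>B\<in>sets borel. bounded_linear (E B) \<and> (\<forall>x. E B (E B x) = E B x) \<and>
         (\<forall>x y. inner (E B x) y = inner x (E B y)) \<and> (\<forall>x. E B (J x) = J (E B x))" using h by (rule conjunct1)
  have a2: "\<forall>x. E UNIV x = x" using h by (elim conjE)
  have a3: "\<forall>B\<in>sets borel. \<forall>C\<in>sets borel. \<forall>x. E (B \<inter> C) x = E B (E C x)" using h by (elim conjE)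
  have a4: "\<forall>x F. range F \<subseteq> sets borel \<longrightarrow> disjoint_family F \<longrightarrow>
         (\<lambda>n. inner (E (F n) x) x) sums inner (E (\<Union>(range F)) x) x" using h by (elim conjE)
  show ?thesis unfolding pvm_def
    apply (intro conjI allI impI)
    using a1 apply simp
    using a1 apply simp
    using a1 apply simp
    using a2 apply simp
    using a3 apply simp
    using a4 apply simp
    done
qed

context pvm
begin

abbreviation "nu x \<equiv> spec_qmeasure E x"

lemma E_nonneg: "B \<in> sets borel \<Longrightarrow> 0 \<le> inner (E B x) x"
proof -
  assume B: "B \<in> sets borel"
  have "inner (E B x) x = inner (E B (E B x)) x" using E_idem[OF B] by simp
  also have "\<dots> = inner (E B x) (E B x)" using E_sym[OF B] by simp
  finally show ?thesis by simp
qed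

lemma E_norm: "B \<in> sets borel \<Longrightarrow> inner (E B x) (E B x) = inner (E B x) x"
proof -
  assume B: "B \<in> sets borel"
  have "inner (E B x) x = inner (E B (E B x)) x" using E_idem[OF B] by simp
  also have "\<dots> = inner (E B x) (E B x)" using E_sym[OF B] by simp
  finally show ?thesis by simp
qed

lemma E_empty: "E {} x = 0"
proof -
  have "(\<lambda>n. inner (E ((\<lambda>_. {}) n) x) x) sums inner (E (\<Union>(range (\<lambda>_::nat. {}))) x) x"
    by (rule E_sums) (auto simp: disjoint_family_on_def)
  then have "(\<lambda>n::nat. inner (E {} x) x) sums inner (E {} x) x" by simp
  then have "(\<lambda>n::nat. inner (E {} x) x) \<longlonglongrightarrow> 0" by (intro summable_LIMSEQ_zero sums_summable)
  then have "inner (E {} x) x = 0" by (simp add: LIMSEQ_const_iff)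
  then have "inner (E {} x) (E {} x) = 0" using E_norm[of "{}"] by simp
  then show ?thesis by simp
qed

lemma sets_nu[simp]: "sets (nu x) = sets borel"
  unfolding spec_qmeasure_def
  by (simp add: sets_measure_of_conv sets.sigma_sets_eq[of borel, simplified])

lemma space_nu[simp]: "space (nu x) = UNIV"
  using sets_eq_imp_space_eq[OF sets_nu[of x]] by simp

lemma emeasure_nu: "B \<in> sets borel \<Longrightarrow> emeasure (nu x) B = ennreal (inner (E B x) x)"
  unfolding spec_qmeasure_def
proof (rule emeasure_measure_of_sigma)
  show "sigma_algebra UNIV (sets borel)" using sets.sigma_algebra_axioms[of borel] by simp
  show "positive (sets borel) (\<lambda>B. ennreal (inner (E B x) x))"
    unfolding positive_def by (simp add: E_empty)
  show "countably_additive (sets borel) (\<lambda>B. ennreal (inner (E B x) x))"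
    unfolding countably_additive_def
  proof (intro allI impI)
    fix F :: "nat \<Rightarrow> real set" assume F: "range F \<subseteq> sets borel" "disjoint_family F"
    have "(\<lambda>n. inner (E (F n) x) x) sums inner (E (\<Union>(range F)) x) x" by (rule E_sums[OF F])
    moreover have "\<And>n. 0 \<le> inner (E (F n) x) x" using F(1) E_nonneg by blast
    moreover have "0 \<le> inner (E (\<Union>(range F)) x) x" using F(1)
      by (intro E_nonneg) (rule sets.countable_UN)
    ultimately have "(\<lambda>n. ennreal (inner (E (F n) x) x)) sums ennreal (inner (E (\<Union>(range F)) x) x)"
      by simp
    then show "(\<Sum>n. ennreal (inner (E (F n) x) x)) = ennreal (inner (E (\<Union>(range F)) x) x)"
      by (rule sums_unique[symmetric])
  qed
qed

lemma finite_nu: "finite_measure (nu x)"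
  by (rule finite_measureI) (simp add: emeasure_nu[of UNIV, simplified])

lemma measure_nu: "B \<in> sets borel \<Longrightarrow> measure (nu x) B = inner (E B x) x"
  by (simp add: measure_def emeasure_nu E_nonneg)

lemma measure_nu_UNIV: "measure (nu x) UNIV = inner x x"
  using measure_nu[of UNIV x] by (simp add: E_UNIV)

lemma E_le: "B \<in> sets borel \<Longrightarrow> inner (E B x) x \<le> inner x x"
proof -
  assume B: "B \<in> sets borel"
  interpret finite_measure "nu x" by (rule finite_nu)
  have "measure (nu x) B \<le> measure (nu x) UNIV"
    using B by (intro finite_measure_mono) auto
  then show ?thesis using measure_nu[OF B] measure_nu_UNIV by simp
qed

lemma E_orth: "B \<in> sets borel \<Longrightarrow> inner (E B x) (E (- B) x) = 0"
proof -
  assume B: "B \<in> sets borel"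
  have B': "- B \<in> sets borel" using B by auto
  have "inner (E B x) (E (- B) x) = inner (E (- B) (E B x)) x"
    using E_sym[OF B'] by (simp add: inner_commute)
  also have "\<dots> = inner (E (- B \<inter> B) x) x" using E_inter[OF B' B] by simp
  also have "\<dots> = 0" by (simp add: E_empty)
  finally show ?thesis .
qed

lemma E_compl: "B \<in> sets borel \<Longrightarrow> E (- B) x = x - E B x"
proof -
  assume B: "B \<in> sets borel"
  have B': "- B \<in> sets borel" using B by auto
  interpret finite_measure "nu x" by (rule finite_nu)
  have "measure (nu x) (B \<union> - B) = measure (nu x) B + measure (nu x) (- B)"
    using B B' by (intro finite_measure_Union) auto
  then have s: "inner (E B x) x + inner (E (- B) x) x = inner x x"
    using measure_nu[OF B] measure_nu[OF B'] measure_nu_UNIV by simp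
  have o: "inner (E B x) (E (- B) x) = 0"
  proof -
    have "inner (E B x) (E (- B) x) = inner (E (- B) (E B x)) x"
      using E_sym[OF B'] by (simp add: inner_commute)
    also have "\<dots> = inner (E (- B \<inter> B) x) x" using E_inter[OF B' B] by simp
    also have "\<dots> = 0" by (simp add: E_empty)
    finally show ?thesis .
  qed
  have n1: "inner (E B x) (E B x) = inner (E B x) x" by (rule E_norm[OF B])
  have n2: "inner (E (-B) x) (E (-B) x) = inner (E (-B) x) x" by (rule E_norm[OF B'])
  define w where "w = x - E B x - E (- B) x"
  have "inner w w = inner x x - 2 * inner (E B x) x - 2 * inner (E (-B) x) x
     + inner (E B x) (E B x) + inner (E (-B) x) (E (-B) x) + 2 * inner (E B x) (E (- B) x)"
    unfolding w_def by (simp add: inner_diff_left inner_diff_right inner_commute algebra_simps)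
  also have "\<dots> = 0" using s o n1 n2 by simp
  finally have "w = 0" by simp
  then show ?thesis unfolding w_def by (simp add: algebra_simps)
qed

lemma nu_E: "A \<in> sets borel \<Longrightarrow> nu (E A x) = density (nu x) (indicator A)"
proof (rule measure_eqI)
  assume A: "A \<in> sets borel"
  show "sets (nu (E A x)) = sets (density (nu x) (indicator A))" by simp
  fix B assume "B \<in> sets (nu (E A x))"
  then have B: "B \<in> sets borel" by simp
  have BA: "B \<inter> A \<in> sets borel" using A B by auto
  have "inner (E B (E A x)) (E A x) = inner (E A (E B (E A x))) x"
    by (metis E_sym[OF A] inner_commute)
  also have "\<dots> = inner (E A (E (B \<inter> A) x)) x" using E_inter[OF B A] by simp
  also have "\<dots> = inner (E (A \<inter> (B \<inter> A)) x) x" using E_inter[OF A BA] by simp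
  also have "A \<inter> (B \<inter> A) = A \<inter> B" by auto
  finally have eq: "inner (E B (E A x)) (E A x) = inner (E (A \<inter> B) x) x" .
  have AB: "A \<inter> B \<in> sets borel" using A B by auto
  show "emeasure (nu (E A x)) B = emeasure (density (nu x) (indicator A)) B"
    using A B AB by (simp add: emeasure_nu emeasure_restricted eq)
qed

lemma nu_E': "A \<in> sets borel \<Longrightarrow> nu (E A x) = density (nu x) (\<lambda>\<mu>. ennreal (indicator A \<mu>))"
  using nu_E by (simp add: ennreal_indicator)

lemma meas_nu: "(f :: real \<Rightarrow> real) \<in> borel_measurable borel \<Longrightarrow> f \<in> borel_measurable (nu x)"
  using measurable_cong_sets[OF sets_nu[of x] refl, of "borel :: real measure"] by (simp only:)

lemma integral_nu_E:
  assumes A: "A \<in> sets borel" and f: "f \<in> borel_measurable borel"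
  shows "integral\<^sup>L (nu (E A x)) (f :: real \<Rightarrow> real) = integral\<^sup>L (nu x) (\<lambda>\<mu>. indicator A \<mu> * f \<mu>)"
proof -
  have "integral\<^sup>L (nu (E A x)) f = integral\<^sup>L (density (nu x) (\<lambda>\<mu>. ennreal (indicator A \<mu>))) f"
    using nu_E'[OF A] by simp
  also have "\<dots> = integral\<^sup>L (nu x) (\<lambda>\<mu>. indicator A \<mu> *\<^sub>R f \<mu>)"
  proof (rule integral_density)
    show "f \<in> borel_measurable (nu x)" using meas_nu[OF f] .
    show "(\<lambda>\<mu>. indicator A \<mu>) \<in> borel_measurable (nu x)" using A by (intro borel_measurable_indicator) simp
    show "AE \<mu> in nu x. 0 \<le> (indicator A \<mu> :: real)" by simp
  qed
  finally show ?thesis by simp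
qed

lemma integrable_nu_E:
  assumes A: "A \<in> sets borel" and f: "f \<in> borel_measurable borel"
  shows "integrable (nu (E A x)) (f :: real \<Rightarrow> real) \<longleftrightarrow> integrable (nu x) (\<lambda>\<mu>. indicator A \<mu> * f \<mu>)"
proof -
  have "integrable (nu (E A x)) f \<longleftrightarrow> integrable (density (nu x) (\<lambda>\<mu>. ennreal (indicator A \<mu>))) f"
    using nu_E'[OF A] by simp
  also have "\<dots> \<longleftrightarrow> integrable (nu x) (\<lambda>\<mu>. indicator A \<mu> *\<^sub>R f \<mu>)"
  proof (rule integrable_density)
    show "f \<in> borel_measurable (nu x)" using meas_nu[OF f] .
    show "(\<lambda>\<mu>. indicator A \<mu>) \<in> borel_measurable (nu x)" using A by (intro borel_measurable_indicator) simp
    show "AE \<mu> in nu x. 0 \<le> (indicator A \<mu> :: real)" by simp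
  qed
  finally show ?thesis by simp
qed

lemma nu_scale: "nu (r *\<^sub>R x) = density (nu x) (\<lambda>_. ennreal (r\<^sup>2))"
proof (rule measure_eqI)
  show "sets (nu (r *\<^sub>R x)) = sets (density (nu x) (\<lambda>_. ennreal (r\<^sup>2)))" by simp
  fix B assume "B \<in> sets (nu (r *\<^sub>R x))"
  then have B: "B \<in> sets borel" by simp
  have "inner (E B (r *\<^sub>R x)) (r *\<^sub>R x) = r\<^sup>2 * inner (E B x) x"
    using linear_scale[OF bounded_linear.linear[OF E_lin[OF B]]] by (simp add: power2_eq_square)
  then show "emeasure (nu (r *\<^sub>R x)) B = emeasure (density (nu x) (\<lambda>_. ennreal (r\<^sup>2))) B"
    using B by (simp add: emeasure_nu emeasure_density_const ennreal_mult E_nonneg)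
qed

lemma sform_scale: "sform E (r *\<^sub>R x) = r\<^sup>2 * sform E x"
proof -
  have "sform E (r *\<^sub>R x) = integral\<^sup>L (density (nu x) (\<lambda>_. ennreal (r\<^sup>2))) (\<lambda>\<mu>. \<mu>)"
    unfolding sform_def using nu_scale by simp
  also have "\<dots> = integral\<^sup>L (nu x) (\<lambda>\<mu>. r\<^sup>2 *\<^sub>R \<mu>)"
  proof (rule integral_density)
    show "(\<lambda>\<mu>. \<mu>) \<in> borel_measurable (nu x)" by (rule meas_nu) simp
    show "(\<lambda>_. r\<^sup>2) \<in> borel_measurable (nu x)" by simp
    show "AE \<mu> in nu x. 0 \<le> r\<^sup>2" by simp
  qed
  finally show ?thesis unfolding sform_def by simp
qed


lemma sq_integrable_imp:
  assumes "integrable (nu x) (\<lambda>\<mu>. \<mu>\<^sup>2)"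
  shows "integrable (nu x) (\<lambda>\<mu>. \<mu>)"
proof -
  interpret finite_measure "nu x" by (rule finite_nu)
  have "integrable (nu x) (\<lambda>\<mu>. 1 + \<mu>\<^sup>2)" using assms by simp
  moreover have "(\<lambda>\<mu>::real. \<mu>) \<in> borel_measurable (nu x)" by (rule meas_nu) simp
  moreover have "AE \<mu> in nu x. norm \<mu> \<le> norm (1 + \<mu>\<^sup>2)"
  proof (rule AE_I2)
    fix \<mu> :: real
    have "\<bar>\<mu>\<bar> \<le> 1 + \<mu>\<^sup>2"
    proof (cases "\<bar>\<mu>\<bar> \<le> 1")
      case True then show ?thesis by (simp add: add_increasing2)
    next
      case False
      then have "\<bar>\<mu>\<bar> * 1 \<le> \<bar>\<mu>\<bar> * \<bar>\<mu>\<bar>" by (intro mult_left_mono) auto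
      then have "\<bar>\<mu>\<bar> \<le> \<bar>\<mu>\<bar> * \<bar>\<mu>\<bar>" by (simp only: mult_1_right)
      moreover have "\<bar>\<mu>\<bar> * \<bar>\<mu>\<bar> = \<mu>\<^sup>2" by (simp add: power2_eq_square)
      ultimately show ?thesis by linarith
    qed
    then show "norm \<mu> \<le> norm (1 + \<mu>\<^sup>2)" by simp
  qed
  ultimately show ?thesis by (rule Bochner_Integration.integrable_bound)
qed

lemma lower_bound:
  assumes sm: "spectral_measure_of J D A E" and sa: "selfadjoint J D A" and e: "e > 0"
    and zero: "\<forall>y. E {-e<..<e} y = 0" and xD: "x \<in> D"
  shows "e * norm x \<le> norm (A x)"
proof -
  define S :: "real set" where "S = {-e<..<e}"
  define P :: "real set" where "P = {0<..}"
  have S: "S \<in> sets borel" and P: "P \<in> sets borel" and P': "- P \<in> sets borel"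
    unfolding S_def P_def by auto
  have smf: "D = {x. integrable (spec_qmeasure E x) (\<lambda>\<mu>. \<mu> ^ 2)} \<and>
     (\<forall>x\<in>D. inner (A x) x = integral\<^sup>L (spec_qmeasure E x) (\<lambda>\<mu>. \<mu>))"
    using sm unfolding spectral_measure_of_def by (elim conjE) (intro conjI; assumption)
  have Ddef: "D = {x. integrable (nu x) (\<lambda>\<mu>. \<mu> ^ 2)}" using smf by (rule conjunct1)
  have quad: "\<And>x. x \<in> D \<Longrightarrow> inner (A x) x = integral\<^sup>L (nu x) (\<lambda>\<mu>. \<mu>)" using smf by blast
  note saf = sa_facts[OF sa]
  interpret finite_measure "nu x" by (rule finite_nu)
  have intsq: "integrable (nu x) (\<lambda>\<mu>. \<mu>\<^sup>2)" using xD Ddef by simp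
  have int1: "integrable (nu x) (\<lambda>\<mu>. \<mu>)" by (rule sq_integrable_imp[OF intsq])
  have "emeasure (nu x) S = 0" using S zero unfolding S_def by (simp add: emeasure_nu)
  then have "S \<in> null_sets (nu x)" using S by (simp add: null_sets_def)
  then have AES: "AE \<mu> in nu x. \<mu> \<notin> S" by (rule AE_not_in)
  define xp where "xp = E P x"
  define xn where "xn = E (- P) x"
  have xsum: "x = xp + xn" unfolding xp_def xn_def using E_compl[OF P] by simp
  have xpD: "xp \<in> D"
  proof -
    have "integrable (nu x) (\<lambda>\<mu>. indicator P \<mu> *\<^sub>R \<mu>\<^sup>2)" using P intsq by (intro integrable_mult_indicator) simp_all
    then have "integrable (nu (E P x)) (\<lambda>\<mu>. \<mu>\<^sup>2)" using integrable_nu_E[OF P, of "\<lambda>\<mu>. \<mu>\<^sup>2" x] by simp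
    then show ?thesis unfolding xp_def using Ddef by simp
  qed
  have xnD: "xn \<in> D"
  proof -
    have "xn = x - xp" using xsum by simp
    then show ?thesis using xD xpD saf(2) subspace_diff by blast
  qed
  have ip: "integrable (nu x) (\<lambda>\<mu>. indicator P \<mu> * \<mu>)"
    using integrable_mult_indicator[OF _ int1, of P] P by simp
  have in': "integrable (nu x) (\<lambda>\<mu>. indicator (- P) \<mu> * \<mu>)"
    using integrable_mult_indicator[OF _ int1, of "- P"] P' by simp
  have qp: "inner (A xp) xp = integral\<^sup>L (nu x) (\<lambda>\<mu>. indicator P \<mu> * \<mu>)"
    using quad[OF xpD] integral_nu_E[OF P, of "\<lambda>\<mu>. \<mu>" x] unfolding xp_def by simp
  have qn: "inner (A xn) xn = integral\<^sup>L (nu x) (\<lambda>\<mu>. indicator (- P) \<mu> * \<mu>)"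
    using quad[OF xnD] integral_nu_E[OF P', of "\<lambda>\<mu>. \<mu>" x] unfolding xn_def by simp
  have qx: "inner (A x) x = inner (A xp) xp + inner (A xn) xn"
  proof -
    have "integral\<^sup>L (nu x) (\<lambda>\<mu>. \<mu>) = integral\<^sup>L (nu x) (\<lambda>\<mu>. indicator P \<mu> * \<mu> + indicator (- P) \<mu> * \<mu>)"
      by (rule arg_cong[where f="integral\<^sup>L (nu x)"]) (auto simp: indicator_def fun_eq_iff)
    also have "\<dots> = integral\<^sup>L (nu x) (\<lambda>\<mu>. indicator P \<mu> * \<mu>) + integral\<^sup>L (nu x) (\<lambda>\<mu>. indicator (- P) \<mu> * \<mu>)"
      by (rule Bochner_Integration.integral_add[OF ip in'])
    finally show ?thesis using quad[OF xD] qp qn by simp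
  qed
  have mP: "measure (nu x) P = inner xp xp" unfolding xp_def using measure_nu[OF P] E_norm[OF P] by simp
  have mN: "measure (nu x) (- P) = inner xn xn" unfolding xn_def using measure_nu[OF P'] E_norm[OF P'] by simp
  have lowP: "e * inner xp xp \<le> inner (A xp) xp"
  proof -
    have "integral\<^sup>L (nu x) (\<lambda>\<mu>. e * indicator P \<mu>) \<le> integral\<^sup>L (nu x) (\<lambda>\<mu>. indicator P \<mu> * \<mu>)"
    proof (rule integral_mono_AE)
      show "integrable (nu x) (\<lambda>\<mu>. e * indicator P \<mu>)" using P by (simp add: emeasure_nu)
      show "integrable (nu x) (\<lambda>\<mu>. indicator P \<mu> * \<mu>)" by (rule ip)
      show "AE \<mu> in nu x. e * indicator P \<mu> \<le> indicator P \<mu> * \<mu>"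
        using AES by eventually_elim (auto simp: S_def P_def indicator_def)
    qed
    then show ?thesis using qp mP P by simp
  qed
  have upN: "inner (A xn) xn \<le> - e * inner xn xn"
  proof -
    have "integral\<^sup>L (nu x) (\<lambda>\<mu>. indicator (- P) \<mu> * \<mu>) \<le> integral\<^sup>L (nu x) (\<lambda>\<mu>. - e * indicator (- P) \<mu>)"
    proof (rule integral_mono_AE)
      show "integrable (nu x) (\<lambda>\<mu>. - e * indicator (- P) \<mu>)" using P' by (simp add: emeasure_nu)
      show "integrable (nu x) (\<lambda>\<mu>. indicator (- P) \<mu> * \<mu>)" by (rule in')
      show "AE \<mu> in nu x. indicator (- P) \<mu> * \<mu> \<le> - e * indicator (- P) \<mu>"
        using AES by eventually_elim (auto simp: S_def P_def indicator_def)
    qed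
    then show ?thesis using qn mN P' by simp
  qed
  have Ax: "A x = A xp + A xn" using xsum saf(4)[OF xpD xnD] by simp
  have symn: "inner (A xn) xp = inner (A xp) xn" using saf(8)[OF xnD xpD] by (simp add: inner_commute)
  have cross: "inner (A xp) xn = 0"
  proof -
    have "inner (A x) x = inner (A xp) xp + inner (A xp) xn + inner (A xn) xp + inner (A xn) xn"
      unfolding Ax using xsum by (simp add: inner_add_left inner_add_right)
    then show ?thesis using qx symn by simp
  qed
  have orth: "inner xp xn = 0" unfolding xp_def xn_def by (rule E_orth[OF P])
  have nx: "inner x x = inner xp xp + inner xn xn"
    using xsum orth by (simp add: inner_add_left inner_add_right inner_commute)
  have nd: "inner (xp - xn) (xp - xn) = inner x x"
    using nx orth by (simp add: inner_diff_left inner_diff_right inner_commute)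
  have key: "e * inner x x \<le> inner (A x) (xp - xn)"
  proof -
    have "inner (A x) (xp - xn) = inner (A xp) xp - inner (A xn) xn"
      unfolding Ax using cross symn by (simp add: inner_add_left inner_diff_right)
    then show ?thesis using lowP upN nx by (simp add: algebra_simps)
  qed
  also have "\<dots> \<le> norm (A x) * norm (xp - xn)" by (rule norm_cauchy_schwarz)
  also have "norm (xp - xn) = norm x" using nd by (simp add: norm_eq_sqrt_inner)
  finally have "e * (norm x * norm x) \<le> norm (A x) * norm x" by (simp add: dot_square_norm power2_eq_square)
  then show ?thesis
  proof (cases "x = 0")
    case True then show ?thesis using e by simp
  next
    case False
    then have "norm x > 0" by simp
    then show ?thesis using \<open>e * (norm x * norm x) \<le> norm (A x) * norm x\<close>
      by (simp add: mult.assoc[symmetric] mult_le_cancel_right_pos)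
  qed
qed

lemma band_meas: "(\<lambda>\<mu>. indicator A \<mu> * \<mu>) \<in> borel_measurable (nu z)" if "A \<in> sets borel" for A :: "real set"
  using that by (intro meas_nu borel_measurable_times borel_measurable_indicator) auto

lemma band_integrable:
  assumes e: "e \<ge> 0"
  shows "integrable (nu z) (\<lambda>\<mu>. indicator {-e<..<e} \<mu> * \<mu>)"
proof -
  interpret finite_measure "nu z" by (rule finite_nu)
  have S: "{-e<..<e} \<in> sets (borel :: real measure)" by simp
  show ?thesis
  proof (rule Bochner_Integration.integrable_bound)
    show "integrable (nu z) (\<lambda>\<mu>. e * indicator {-e<..<e} \<mu>)" using S by (simp add: emeasure_nu)
    show "(\<lambda>\<mu>. indicator {-e<..<e} \<mu> * \<mu>) \<in> borel_measurable (nu z)" by (rule band_meas[OF S])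
    show "AE \<mu> in nu z. norm (indicator {-e<..<e} \<mu> * \<mu>) \<le> norm (e * indicator {-e<..<e} \<mu>)"
      using e by (intro AE_I2) (auto simp: indicator_def)
  qed
qed

lemma band_bound:
  assumes e: "e \<ge> 0"
  shows "\<bar>integral\<^sup>L (nu z) (\<lambda>\<mu>. indicator {-e<..<e} \<mu> * \<mu>)\<bar> \<le> e * inner z z"
proof -
  interpret finite_measure "nu z" by (rule finite_nu)
  define S :: "real set" where "S = {-e<..<e}"
  have S: "S \<in> sets borel" unfolding S_def by simp
  have i: "integrable (nu z) (\<lambda>\<mu>. indicator S \<mu> * \<mu>)" unfolding S_def by (rule band_integrable[OF e])
  have ie: "integrable (nu z) (\<lambda>\<mu>. e * indicator S \<mu>)" using S by (simp add: emeasure_nu)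
  have ie': "integrable (nu z) (\<lambda>\<mu>. - e * indicator S \<mu>)" using S by (simp add: emeasure_nu)
  have up: "integral\<^sup>L (nu z) (\<lambda>\<mu>. indicator S \<mu> * \<mu>) \<le> integral\<^sup>L (nu z) (\<lambda>\<mu>. e * indicator S \<mu>)"
    by (rule integral_mono[OF i ie]) (auto simp: S_def indicator_def)
  have lo: "integral\<^sup>L (nu z) (\<lambda>\<mu>. - e * indicator S \<mu>) \<le> integral\<^sup>L (nu z) (\<lambda>\<mu>. indicator S \<mu> * \<mu>)"
    by (rule integral_mono[OF ie' i]) (auto simp: S_def indicator_def)
  have m: "measure (nu z) S \<le> inner z z" using measure_nu[OF S] E_le[OF S] by simp
  have "e * measure (nu z) S \<le> e * inner z z" using m e by (rule mult_left_mono)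
  then show ?thesis using up lo S unfolding S_def by (simp add: abs_le_iff)
qed

lemma band_vec:
  assumes e: "e \<ge> 0"
  shows "integrable (nu (E {-e<..<e} y)) (\<lambda>\<mu>. \<mu>)"
    and "\<bar>sform E (E {-e<..<e} y)\<bar> \<le> e * inner (E {-e<..<e} y) (E {-e<..<e} y)"
proof -
  define S :: "real set" where "S = {-e<..<e}"
  have S: "S \<in> sets borel" unfolding S_def by simp
  have "integrable (nu y) (\<lambda>\<mu>. indicator S \<mu> * \<mu>)" unfolding S_def by (rule band_integrable[OF e])
  then show "integrable (nu (E {-e<..<e} y)) (\<lambda>\<mu>. \<mu>)"
    using integrable_nu_E[OF S, of "\<lambda>\<mu>. \<mu>" y] unfolding S_def by simp
  define x where "x = E S y"
  have xx: "E S x = x" unfolding x_def by (rule E_idem[OF S])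
  have "sform E x = integral\<^sup>L (nu (E S x)) (\<lambda>\<mu>. \<mu>)" unfolding sform_def using xx by simp
  also have "\<dots> = integral\<^sup>L (nu x) (\<lambda>\<mu>. indicator S \<mu> * \<mu>)" by (rule integral_nu_E[OF S]) simp
  finally have "\<bar>sform E x\<bar> \<le> e * inner x x" using band_bound[OF e, of x] unfolding S_def by simp
  then show "\<bar>sform E (E {-e<..<e} y)\<bar> \<le> e * inner (E {-e<..<e} y) (E {-e<..<e} y)"
    unfolding x_def S_def .
qed

lemma split_form:
  assumes e: "e \<ge> 0" and m: "integrable (nu m) (\<lambda>\<mu>. \<mu>)"
    and eq: "E (- {-e<..<e}) z = E (- {-e<..<e}) m"
  shows "integrable (nu z) (\<lambda>\<mu>. \<mu>)"
    and "sform E m - e * inner z z - e * inner m m \<le> sform E z"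
proof -
  define S :: "real set" where "S = {-e<..<e}"
  have S: "S \<in> sets borel" unfolding S_def by simp
  have S': "- S \<in> sets borel" using S by simp
  have eq': "E (- S) z = E (- S) m" using eq unfolding S_def .
  have iSz: "integrable (nu z) (\<lambda>\<mu>. indicator S \<mu> * \<mu>)" unfolding S_def by (rule band_integrable[OF e])
  have iSm: "integrable (nu m) (\<lambda>\<mu>. indicator S \<mu> * \<mu>)" unfolding S_def by (rule band_integrable[OF e])
  have iNm: "integrable (nu m) (\<lambda>\<mu>. indicator (- S) \<mu> * \<mu>)"
    using integrable_mult_indicator[OF _ m, of "- S"] S' by simp
  have "integrable (nu (E (- S) m)) (\<lambda>\<mu>. \<mu>)" using integrable_nu_E[OF S', of "\<lambda>\<mu>. \<mu>" m] iNm by simp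
  then have "integrable (nu (E (- S) z)) (\<lambda>\<mu>. \<mu>)" using eq' by simp
  then have iNz: "integrable (nu z) (\<lambda>\<mu>. indicator (- S) \<mu> * \<mu>)"
    using integrable_nu_E[OF S', of "\<lambda>\<mu>. \<mu>" z] by simp
  have funeq: "(\<lambda>\<mu>::real. \<mu>) = (\<lambda>\<mu>. indicator S \<mu> * \<mu> + indicator (- S) \<mu> * \<mu>)"
    by (auto simp: indicator_def fun_eq_iff)
  show "integrable (nu z) (\<lambda>\<mu>. \<mu>)"
    by (subst funeq) (rule Bochner_Integration.integrable_add[OF iSz iNz])
  have dz: "sform E z = integral\<^sup>L (nu z) (\<lambda>\<mu>. indicator S \<mu> * \<mu>) + integral\<^sup>L (nu z) (\<lambda>\<mu>. indicator (- S) \<mu> * \<mu>)"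
    unfolding sform_def by (subst funeq) (rule Bochner_Integration.integral_add[OF iSz iNz])
  have dm: "sform E m = integral\<^sup>L (nu m) (\<lambda>\<mu>. indicator S \<mu> * \<mu>) + integral\<^sup>L (nu m) (\<lambda>\<mu>. indicator (- S) \<mu> * \<mu>)"
    unfolding sform_def by (subst funeq) (rule Bochner_Integration.integral_add[OF iSm iNm])
  have "integral\<^sup>L (nu z) (\<lambda>\<mu>. indicator (- S) \<mu> * \<mu>) = integral\<^sup>L (nu (E (- S) z)) (\<lambda>\<mu>. \<mu>)"
    using integral_nu_E[OF S', of "\<lambda>\<mu>. \<mu>" z] by simp
  also have "\<dots> = integral\<^sup>L (nu (E (- S) m)) (\<lambda>\<mu>. \<mu>)" using eq' by simp
  also have "\<dots> = integral\<^sup>L (nu m) (\<lambda>\<mu>. indicator (- S) \<mu> * \<mu>)"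
    using integral_nu_E[OF S', of "\<lambda>\<mu>. \<mu>" m] by simp
  finally have JN: "integral\<^sup>L (nu z) (\<lambda>\<mu>. indicator (- S) \<mu> * \<mu>) = integral\<^sup>L (nu m) (\<lambda>\<mu>. indicator (- S) \<mu> * \<mu>)" .
  have bz: "\<bar>integral\<^sup>L (nu z) (\<lambda>\<mu>. indicator S \<mu> * \<mu>)\<bar> \<le> e * inner z z" unfolding S_def by (rule band_bound[OF e])
  have bm: "\<bar>integral\<^sup>L (nu m) (\<lambda>\<mu>. indicator S \<mu> * \<mu>)\<bar> \<le> e * inner m m" unfolding S_def by (rule band_bound[OF e])
  show "sform E m - e * inner z z - e * inner m m \<le> sform E z"
    using dz dm JN bz bm by (simp add: abs_le_iff)
qed

end


lemma mvt_bound: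
  fixes g g' :: "real \<Rightarrow> real"
  assumes ab: "a < b" and sub: "{a..b} \<subseteq> \<Delta>"
    and der: "\<forall>l\<in>\<Delta>. (g has_real_derivative g' l) (at l within \<Delta>)"
    and bnd: "\<forall>l. a < l \<and> l < b \<longrightarrow> g' l \<le> - d"
  shows "g b \<le> g a - d * (b - a)"
proof -
  have "\<exists>x\<in>{a<..<b}. g b - g a = (\<lambda>h. g' x * h) (b - a)"
  proof (rule mvt_simple[OF ab])
    fix x assume "a \<le> x" "x \<le> b"
    then have "x \<in> \<Delta>" using sub by auto
    then have "(g has_real_derivative g' x) (at x within \<Delta>)" using der by (rule bspec[rotated])
    then have "(g has_real_derivative g' x) (at x within {a..b})" using sub by (rule DERIV_subset)
    then show "(g has_derivative (\<lambda>h. g' x * h)) (at x within {a..b})"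
      by (simp add: has_field_derivative_def)
  qed
  then obtain x where x: "a < x" "x < b" "g b - g a = g' x * (b - a)" by auto
  have "g' x \<le> - d" using bnd[rule_format, of x] x by simp
  then have "g' x * (b - a) \<le> (- d) * (b - a)" using ab by (intro mult_right_mono) auto
  then show ?thesis using x by (simp add: algebra_simps)
qed

lemma crossing:
  fixes g g' :: "real \<Rightarrow> real"
  assumes intv: "is_interval \<Delta>" and m1: "\<mu>1 \<in> \<Delta>" and m2: "\<mu>2 \<in> \<Delta>" and m12: "\<mu>1 < \<mu>2"
    and cont: "continuous_on \<Delta> g"
    and der: "\<forall>l\<in>\<Delta>. (g has_real_derivative g' l) (at l within \<Delta>)"
    and cross: "\<forall>l0\<in>\<Delta>. g l0 = 0 \<longrightarrow> (\<forall>l\<in>\<Delta>. (l < l0 \<longrightarrow> g l > 0) \<and> (l > l0 \<longrightarrow> g l < 0))"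
    and vm: "\<forall>l\<in>{\<mu>1..\<mu>2}. \<bar>g l\<bar> \<le> \<epsilon>1 \<longrightarrow> g' l \<le> - \<delta>"
    and d: "\<delta> > 0" and ge: "g \<mu>2 \<ge> - e" and e1: "e < \<epsilon>1" and e2: "e < \<delta> * (\<mu>2 - \<mu>1)"
  shows "g \<mu>1 > 0"
proof (rule ccontr)
  assume "\<not> g \<mu>1 > 0"
  then have g1: "g \<mu>1 \<le> 0" by simp
  define I where "I = {\<mu>1..\<mu>2}"
  have IsubD: "I \<subseteq> \<Delta>"
  proof
    fix l assume "l \<in> I"
    then have "\<mu>1 \<le> l" "l \<le> \<mu>2" by (auto simp: I_def)
    then show "l \<in> \<Delta>" by (rule mem_is_interval_1_I[OF intv m1 m2])
  qed
  have contI: "continuous_on I g" using cont IsubD by (rule continuous_on_subset)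
  have neg: "g l \<le> 0" if l: "l \<in> I" for l
  proof (rule ccontr)
    assume "\<not> g l \<le> 0"
    then have gl: "g l > 0" by simp
    have "\<mu>1 \<le> l" "l \<le> \<mu>2" using l unfolding I_def by auto
    have "{\<mu>1..l} \<subseteq> I" using \<open>l \<le> \<mu>2\<close> unfolding I_def by auto
    with contI have cl: "continuous_on {\<mu>1..l} g" by (rule continuous_on_subset)
    have "\<exists>x. \<mu>1 \<le> x \<and> x \<le> l \<and> g x = 0"
      by (rule IVT'[OF g1 less_imp_le[OF gl] \<open>\<mu>1 \<le> l\<close> cl])
    then obtain l0 where l0: "\<mu>1 \<le> l0" "l0 \<le> l" "g l0 = 0" by blast
    have l0D: "l0 \<in> \<Delta>" using IsubD l0 \<open>l \<le> \<mu>2\<close> unfolding I_def by auto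
    have lD: "l \<in> \<Delta>" using IsubD l by auto
    have "l0 \<noteq> l" using l0 gl by auto
    then have "l0 < l" using l0 by simp
    show False
    proof (cases "\<mu>1 < l0")
      case True
      then have "g \<mu>1 > 0" using cross[rule_format, OF l0D l0(3) m1] by simp
      then show False using g1 by simp
    next
      case False
      then have "l0 = \<mu>1" using l0 by simp
      then have "g l < 0" using cross[rule_format, OF l0D l0(3) lD] \<open>l0 < l\<close> by simp
      then show False using gl by simp
    qed
  qed
  define C where "C = I \<inter> g -` {..- \<epsilon>1}"
  have e1': "g \<mu>2 > - \<epsilon>1" using ge e1 by simp
  show False
  proof (cases "C = {}")
    case True
    have "g \<mu>2 \<le> g \<mu>1 - \<delta> * (\<mu>2 - \<mu>1)"
    proof (rule mvt_bound[OF m12 _ der])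
      show "{\<mu>1..\<mu>2} \<subseteq> \<Delta>" using IsubD unfolding I_def .
      show "\<forall>l. \<mu>1 < l \<and> l < \<mu>2 \<longrightarrow> g' l \<le> - \<delta>"
      proof (intro allI impI)
        fix l assume l: "\<mu>1 < l \<and> l < \<mu>2"
        then have lI: "l \<in> I" unfolding I_def by auto
        then have "g l > - \<epsilon>1" using True unfolding C_def by auto
        then have "\<bar>g l\<bar> \<le> \<epsilon>1" using neg[OF lI] by simp
        then show "g' l \<le> - \<delta>" using vm[rule_format, of l] lI unfolding I_def by simp
      qed
    qed
    then show False using g1 ge e2 by simp
  next
    case False
    have clC: "closed C" unfolding C_def
      using continuous_closed_preimage[OF contI _ closed_atMost] unfolding I_def by simp
    have bdd: "bdd_above C" unfolding C_def I_def by (rule bdd_aboveI[of _ \<mu>2]) auto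
    define l0 where "l0 = Sup C"
    have l0C: "l0 \<in> C" unfolding l0_def using closed_contains_Sup[OF False bdd clC] .
    then have l0I: "l0 \<in> I" and gl0: "g l0 \<le> - \<epsilon>1" unfolding C_def by auto
    have "l0 \<noteq> \<mu>2" using gl0 e1' by auto
    then have l02: "l0 < \<mu>2" using l0I unfolding I_def by auto
    have "g \<mu>2 \<le> g l0 - \<delta> * (\<mu>2 - l0)"
    proof (rule mvt_bound[OF l02 _ der])
      show "{l0..\<mu>2} \<subseteq> \<Delta>" using IsubD l0I unfolding I_def by auto
      show "\<forall>l. l0 < l \<and> l < \<mu>2 \<longrightarrow> g' l \<le> - \<delta>"
      proof (intro allI impI)
        fix l assume l: "l0 < l \<and> l < \<mu>2"
        then have lI: "l \<in> I" using l0I unfolding I_def by auto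
        have "l \<notin> C"
        proof
          assume "l \<in> C"
          then have "l \<le> l0" unfolding l0_def using bdd by (rule cSup_upper)
          then show False using l by simp
        qed
        then have "g l > - \<epsilon>1" using lI unfolding C_def by auto
        then have "\<bar>g l\<bar> \<le> \<epsilon>1" using neg[OF lI] by simp
        then show "g' l \<le> - \<delta>" using vm[rule_format, of l] lI unfolding I_def by simp
      qed
    qed
    moreover have "\<delta> * (\<mu>2 - l0) \<ge> 0"
      using d l02 by simp
    ultimately show False using gl0 e1' by simp
  qed
qed


theorem lemma2p9:
  fixes J :: "'h::{real_inner,complete_space} \<Rightarrow> 'h"
    and \<Delta> :: "real set"
    and Dom :: "real \<Rightarrow> 'h set"
    and T :: "real \<Rightarrow> 'h \<Rightarrow> 'h"
    and E :: "real \<Rightarrow> real set \<Rightarrow> 'h \<Rightarrow> 'h"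
    and \<D> :: "'h set"
    and t' :: "real \<Rightarrow> 'h \<Rightarrow> real"
    and a \<mu>1 \<mu>2 :: real
    and M :: "'h set"
  assumes cplx: "complex_structure J"
    and interval: "is_interval \<Delta>"
    and A1: "\<forall>l\<in>\<Delta>. selfadjoint J (Dom l) (T l) \<and> spectral_measure_of J (Dom l) (T l) (E l)"
    and A2: "\<forall>l\<in>\<Delta>. form_dom (E l) = \<D>"
    and A3: "\<forall>x\<in>\<D> - {0}. continuous_on \<Delta> (\<lambda>l. sform (E l) x) \<and>
               (\<forall>l0\<in>\<Delta>. sform (E l0) x = 0 \<longrightarrow>
                  (\<forall>l\<in>\<Delta>. (l < l0 \<longrightarrow> sform (E l) x > 0) \<and> (l > l0 \<longrightarrow> sform (E l) x < 0)))"
    and VM_diff: "\<forall>u\<in>\<D>. \<forall>l\<in>\<Delta>. ((\<lambda>s. sform (E s) u) has_real_derivative t' l u) (at l within \<Delta>)"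
    and VM_bound: "\<forall>\<alpha> \<beta>. {\<alpha>..\<beta>} \<subseteq> \<Delta> \<longrightarrow>
               (\<exists>\<epsilon>>0. \<exists>\<delta>>0. \<forall>x\<in>\<D>. \<forall>l\<in>{\<alpha>..\<beta>}.
                  norm x = 1 \<longrightarrow> \<bar>sform (E l) x\<bar> \<le> \<epsilon> \<longrightarrow> t' l x \<le> - \<delta>)"
    and a_pos: "a > 0"
    and mu1: "\<mu>1 \<in> \<Delta>" and mu2: "\<mu>2 \<in> \<Delta>" and mu12: "\<mu>1 < \<mu>2"
    and M_sub: "complex_subspace J M" and M_D: "M \<subseteq> \<D>"
    and spec: "\<mu>2 \<in> opfun_spectrum \<Delta> Dom T"
    and M_pos: "\<forall>x\<in>M. sform (E \<mu>2) x \<ge> a * (norm x)\<^sup>2"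
  shows "\<exists>M'. complex_subspace J M' \<and> M \<subset> M' \<and> M' \<subseteq> \<D> \<and>
               (\<forall>x\<in>M' - {0}. sform (E \<mu>1) x > 0)"
proof -
  have I12: "{\<mu>1..\<mu>2} \<subseteq> \<Delta>"
  proof
    fix l assume "l \<in> {\<mu>1..\<mu>2}"
    then have "\<mu>1 \<le> l" "l \<le> \<mu>2" by auto
    then show "l \<in> \<Delta>" by (rule mem_is_interval_1_I[OF interval mu1 mu2])
  qed
  obtain \<epsilon>1 \<delta> where eps1: "\<epsilon>1 > 0" and dpos: "\<delta> > 0"
    and vm: "\<forall>x\<in>\<D>. \<forall>l\<in>{\<mu>1..\<mu>2}. norm x = 1 \<longrightarrow> \<bar>sform (E l) x\<bar> \<le> \<epsilon>1 \<longrightarrow> t' l x \<le> - \<delta>"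
    using VM_bound[rule_format, OF I12] by blast
  define e where "e = min a (min \<epsilon>1 (\<delta> * (\<mu>2 - \<mu>1))) / 2"
  have dd: "\<delta> * (\<mu>2 - \<mu>1) > 0" using dpos mu12 by simp
  have epos: "e > 0" and ea: "e < a" and ee1: "e < \<epsilon>1" and ed: "e < \<delta> * (\<mu>2 - \<mu>1)"
    unfolding e_def using a_pos eps1 dd by (auto simp: min_def)
  have e0: "e \<ge> 0" using epos by simp
  define S :: "real set" where "S = {-e<..<e}"
  have S: "S \<in> sets borel" and S': "- S \<in> sets borel" unfolding S_def by auto
  have A1_2: "selfadjoint J (Dom \<mu>2) (T \<mu>2) \<and> spectral_measure_of J (Dom \<mu>2) (T \<mu>2) (E \<mu>2)"
    using A1 mu2 by (rule bspec)
  have sa2: "selfadjoint J (Dom \<mu>2) (T \<mu>2)" using A1_2 by (rule conjunct1)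
  have sm2: "spectral_measure_of J (Dom \<mu>2) (T \<mu>2) (E \<mu>2)" using A1_2 by (rule conjunct2)
  have A1_1: "selfadjoint J (Dom \<mu>1) (T \<mu>1) \<and> spectral_measure_of J (Dom \<mu>1) (T \<mu>1) (E \<mu>1)"
    using A1 mu1 by (rule bspec)
  have sm1: "spectral_measure_of J (Dom \<mu>1) (T \<mu>1) (E \<mu>1)" using A1_1 by (rule conjunct2)
  interpret P2: pvm "E \<mu>2" by (rule spectral_pvm[OF sm2])
  interpret P1: pvm "E \<mu>1" by (rule spectral_pvm[OF sm1])
  have EJ: "\<forall>B\<in>sets borel. bounded_linear (E \<mu>2 B) \<and> (\<forall>x. E \<mu>2 B (E \<mu>2 B x) = E \<mu>2 B x) \<and>
         (\<forall>x y. inner (E \<mu>2 B x) y = inner x (E \<mu>2 B y)) \<and> (\<forall>x. E \<mu>2 B (J x) = J (E \<mu>2 B x))"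
    using sm2 unfolding spectral_measure_of_def by (rule conjunct1)
  have EJS: "E \<mu>2 (- S) (J u) = J (E \<mu>2 (- S) u)" for u
    using bspec[OF EJ S'] by (elim conjE allE)
  have D2: "\<D> = {x. integrable (spec_qmeasure (E \<mu>2) x) (\<lambda>\<mu>. \<mu>)}"
    using A2 mu2 unfolding form_dom_def by (metis (no_types, lifting))
  have Jlin: "linear J" and JJ: "\<And>x. J (J x) = - x" using cplx unfolding complex_structure_def by auto
  have subM: "subspace M" and JM: "\<And>m. m \<in> M \<Longrightarrow> J m \<in> M"
    using M_sub unfolding complex_subspace_def by auto
  have ne: "\<exists>y. E \<mu>2 S y \<noteq> 0"
  proof (rule ccontr)
    assume "\<not> (\<exists>y. E \<mu>2 S y \<noteq> 0)"
    then have z: "\<forall>y. E \<mu>2 {-e<..<e} y = 0" unfolding S_def by simp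
    have "\<forall>x\<in>Dom \<mu>2. e * norm x \<le> norm (T \<mu>2 x)"
      using P2.lower_bound[OF sm2 sa2 epos z] by blast
    then have "\<not> zero_in_spectrum (Dom \<mu>2) (T \<mu>2)" by (rule no_spec[OF sa2 epos])
    then show False using spec unfolding opfun_spectrum_def by simp
  qed
  then obtain y where y: "E \<mu>2 S y \<noteq> 0" by blast
  define x where "x = E \<mu>2 S y"
  have x0: "x \<noteq> 0" using y unfolding x_def .
  have xint: "integrable (spec_qmeasure (E \<mu>2) x) (\<lambda>\<mu>. \<mu>)"
    using P2.band_vec(1)[OF e0, of y] unfolding x_def S_def .
  have xb: "\<bar>sform (E \<mu>2) x\<bar> \<le> e * inner x x"
    using P2.band_vec(2)[OF e0, of y] unfolding x_def S_def .
  have xD: "x \<in> \<D>" using xint D2 by simp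
  have xM: "x \<notin> M"
  proof
    assume "x \<in> M"
    then have "a * (norm x)\<^sup>2 \<le> sform (E \<mu>2) x" using M_pos by blast
    also have "\<dots> \<le> e * (norm x)\<^sup>2" using xb by (simp add: power2_norm_eq_inner)
    finally have "a * (norm x)\<^sup>2 \<le> e * (norm x)\<^sup>2" .
    moreover have "(norm x)\<^sup>2 > 0" using x0 by simp
    ultimately show False using ea by (simp add: mult_le_cancel_right)
  qed
  have Ex: "E \<mu>2 (- S) x = 0"
  proof -
    have "E \<mu>2 (- S) x = E \<mu>2 (- S \<inter> S) y" unfolding x_def using P2.E_inter[OF S' S] by simp
    then show ?thesis by (simp add: P2.E_empty)
  qed
  have EJx: "E \<mu>2 (- S) (J x) = 0" using EJS[of x] Ex linear_0[OF Jlin] by simp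
  have linN: "linear (E \<mu>2 (- S))" using P2.E_lin[OF S'] by (rule bounded_linear.linear)
  define M' where "M' = {m + \<alpha> *\<^sub>R x + \<beta> *\<^sub>R J x | m \<alpha> \<beta>. m \<in> M}"
  have M'I: "m + \<alpha> *\<^sub>R x + \<beta> *\<^sub>R J x \<in> M'" if "m \<in> M" for m \<alpha> \<beta>
    unfolding M'_def using that by blast
  have M'E: "\<exists>m \<alpha> \<beta>. m \<in> M \<and> z = m + \<alpha> *\<^sub>R x + \<beta> *\<^sub>R J x" if "z \<in> M'" for z
    using that unfolding M'_def by blast
  have M0: "0 \<in> M" using subM subspace_0 by blast
  have subM': "subspace M'"
    unfolding subspace_def
  proof (intro conjI ballI allI)
    show "0 \<in> M'" using M'I[OF M0, of 0 0] by simp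
  next
    fix u v assume "u \<in> M'" "v \<in> M'"
    then obtain m1 a1 b1 m2 a2 b2 where m: "m1 \<in> M" "m2 \<in> M"
      and u: "u = m1 + a1 *\<^sub>R x + b1 *\<^sub>R J x" and v: "v = m2 + a2 *\<^sub>R x + b2 *\<^sub>R J x"
      using M'E by meson
    have "m1 + m2 \<in> M" using m subM subspace_add by blast
    then have "(m1 + m2) + (a1 + a2) *\<^sub>R x + (b1 + b2) *\<^sub>R J x \<in> M'" by (rule M'I)
    then show "u + v \<in> M'" unfolding u v by (simp add: algebra_simps)
  next
    fix c u assume "u \<in> M'"
    then obtain m1 a1 b1 where m: "m1 \<in> M" and u: "u = m1 + a1 *\<^sub>R x + b1 *\<^sub>R J x"
      using M'E by meson
    have "c *\<^sub>R m1 \<in> M" using m subM subspace_scale by blast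
    then have "c *\<^sub>R m1 + (c * a1) *\<^sub>R x + (c * b1) *\<^sub>R J x \<in> M'" by (rule M'I)
    then show "c *\<^sub>R u \<in> M'" unfolding u by (simp add: algebra_simps)
  qed
  have JM': "J ` M' \<subseteq> M'"
  proof
    fix w assume "w \<in> J ` M'"
    then obtain u where "u \<in> M'" and w: "w = J u" by blast
    then obtain m1 a1 b1 where m: "m1 \<in> M" and u: "u = m1 + a1 *\<^sub>R x + b1 *\<^sub>R J x"
      using M'E by meson
    have "J u = J m1 + a1 *\<^sub>R J x + b1 *\<^sub>R J (J x)"
      unfolding u using Jlin by (simp add: linear_add linear_scale)
    also have "\<dots> = J m1 + (- b1) *\<^sub>R x + a1 *\<^sub>R J x" using JJ by (simp add: algebra_simps)
    finally have "J u = J m1 + (- b1) *\<^sub>R x + a1 *\<^sub>R J x" .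
    moreover have "J m1 + (- b1) *\<^sub>R x + a1 *\<^sub>R J x \<in> M'" using JM[OF m] by (rule M'I)
    ultimately show "w \<in> M'" using w by simp
  qed
  have key: "z \<in> \<D> \<and> - e * inner z z \<le> sform (E \<mu>2) z" if z: "z \<in> M'" for z
  proof -
    obtain m \<alpha> \<beta> where m: "m \<in> M" and zz: "z = m + \<alpha> *\<^sub>R x + \<beta> *\<^sub>R J x" using M'E[OF z] by blast
    have mD: "m \<in> \<D>" using m M_D by blast
    have mint: "integrable (spec_qmeasure (E \<mu>2) m) (\<lambda>\<mu>. \<mu>)" using mD D2 by simp
    have eq: "E \<mu>2 (- {-e<..<e}) z = E \<mu>2 (- {-e<..<e}) m"
      unfolding S_def[symmetric] zz using linN Ex EJx by (simp add: linear_add linear_scale)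
    have "integrable (spec_qmeasure (E \<mu>2) z) (\<lambda>\<mu>. \<mu>)" by (rule P2.split_form(1)[OF e0 mint eq])
    then have zD: "z \<in> \<D>" using D2 by simp
    have sf: "sform (E \<mu>2) m - e * inner z z - e * inner m m \<le> sform (E \<mu>2) z"
      by (rule P2.split_form(2)[OF e0 mint eq])
    have "a * inner m m \<le> sform (E \<mu>2) m" using M_pos m by (simp add: power2_norm_eq_inner)
    moreover have "e * inner m m \<le> a * inner m m" using ea by (intro mult_right_mono) auto
    ultimately show ?thesis using zD sf by simp
  qed
  show ?thesis
  proof (intro exI[of _ M'] conjI)
    show "complex_subspace J M'" unfolding complex_subspace_def using subM' JM' by simp
    show "M \<subset> M'"
    proof
      show "M \<subseteq> M'"
      proof
        fix m assume "m \<in> M"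
        then show "m \<in> M'" using M'I[of m 0 0] by simp
      qed
      have "x \<in> M'" using M'I[OF M0, of 1 0] by simp
      then show "M \<noteq> M'" using xM by blast
    qed
    show "M' \<subseteq> \<D>" using key by blast
    show "\<forall>z\<in>M' - {0}. 0 < sform (E \<mu>1) z"
    proof
      fix z assume "z \<in> M' - {0}"
      then have zM: "z \<in> M'" and z0: "z \<noteq> 0" by auto
      define w where "w = (1 / norm z) *\<^sub>R z"
      have wM: "w \<in> M'" unfolding w_def using subM' zM subspace_scale by blast
      have nw: "norm w = 1" unfolding w_def using z0 by simp
      have ww: "inner w w = 1" using nw by (simp add: dot_square_norm)
      have wD: "w \<in> \<D>" and wge: "- e \<le> sform (E \<mu>2) w" using key[OF wM] ww by auto
      have w0: "w \<noteq> 0" using nw by auto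
      have wDm: "w \<in> \<D> - {0}" using wD w0 by simp
      have A3w: "continuous_on \<Delta> (\<lambda>l. sform (E l) w) \<and>
               (\<forall>l0\<in>\<Delta>. sform (E l0) w = 0 \<longrightarrow>
                  (\<forall>l\<in>\<Delta>. (l < l0 \<longrightarrow> sform (E l) w > 0) \<and> (l > l0 \<longrightarrow> sform (E l) w < 0)))"
        using A3 wDm by (rule bspec)
      have pos: "sform (E \<mu>1) w > 0"
      proof (rule crossing[where g = "\<lambda>l. sform (E l) w" and g' = "\<lambda>l. t' l w"])
        show "is_interval \<Delta>" by (rule interval)
        show "\<mu>1 \<in> \<Delta>" "\<mu>2 \<in> \<Delta>" "\<mu>1 < \<mu>2" by (rule mu1, rule mu2, rule mu12)
        show "continuous_on \<Delta> (\<lambda>l. sform (E l) w)" using A3w by (rule conjunct1)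
        show "\<forall>l\<in>\<Delta>. ((\<lambda>l. sform (E l) w) has_real_derivative t' l w) (at l within \<Delta>)"
          using VM_diff wD by (rule bspec)
        show "\<forall>l0\<in>\<Delta>. sform (E l0) w = 0 \<longrightarrow>
                  (\<forall>l\<in>\<Delta>. (l < l0 \<longrightarrow> sform (E l) w > 0) \<and> (l > l0 \<longrightarrow> sform (E l) w < 0))"
          using A3w by (rule conjunct2)
        show "\<forall>l\<in>{\<mu>1..\<mu>2}. \<bar>sform (E l) w\<bar> \<le> \<epsilon>1 \<longrightarrow> t' l w \<le> - \<delta>"
          using vm wD nw by blast
        show "\<delta> > 0" by (rule dpos)
        show "sform (E \<mu>2) w \<ge> - e" by (rule wge)
        show "e < \<epsilon>1" by (rule ee1)
        show "e < \<delta> * (\<mu>2 - \<mu>1)" by (rule ed)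
      qed
      have "z = norm z *\<^sub>R w" unfolding w_def using z0 by simp
      then have "sform (E \<mu>1) z = (norm z)\<^sup>2 * sform (E \<mu>1) w" using P1.sform_scale by metis
      then show "0 < sform (E \<mu>1) z" using pos z0 by simp
    qed
  qed
qed

end
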